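(* Let $n\ge4$, let $m=\lfloor n/2\rfloor$, and let $\pi=(m-1)^{m-1}(n-m)^{n-2m+2}(n-1)^{m-1}$ (exponents denote multiplicities). Then $\pi$ is graphical, $\pi\in\mathrm{BM}(\text{$1$-binding})$, but $\pi\notin\mathrm{BM}(\text{hamiltonian})$.
   Context: Graphs are finite and simple; a graphical sequence is a nondecreasing integer sequence that is the degree sequence of some graph (a realization). $\pi'\ge\pi$ means termwise $\ge$. A graphical sequence is forcibly $P$ if every realization has $P$; for increasing $P$, $\mathrm{BM}(P)$ is the set of graphical $\pi$ such that every graphical $\pi'\ge\pi$ of the same length is forcibly $P$. For $S\subseteq V(G)$ let $N(S)$ be the set of vertices adjacent to some vertex of $S$; with $\mathcal S=\{S\subseteq V(G): S\ne\emptyset,\ N(S)\ne V(G)\}$, the binding number is $\mathrm{bind}(G)=\min_{S\in\mathcal S}|N(S)|/|S|$ (and $\mathrm{bind}(K_n)=n-1$). $G$ is $b$-binding if $\mathrm{bind}(G)\ge b$. *)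

theory Defs
  imports Complex_Main
begin

definition graph_on :: "nat \<Rightarrow> (nat \<Rightarrow> nat \<Rightarrow> bool) \<Rightarrow> bool" where
  "graph_on n E \<longleftrightarrow> (\<forall>u v. E u v \<longrightarrow> u < n \<and> v < n \<and> u \<noteq> v) \<and> (\<forall>u v. E u v \<longrightarrow> E v u)"

definition deg :: "(nat \<Rightarrow> nat \<Rightarrow> bool) \<Rightarrow> nat \<Rightarrow> nat" where
  "deg E v = card {u. E v u}"

text \<open>E is a realization of the sequence ds: a graph on {0..<length ds} whose
degree multiset is that of ds (vertices may be labelled arbitrarily).\<close>

definition realizes :: "(nat \<Rightarrow> nat \<Rightarrow> bool) \<Rightarrow> nat list \<Rightarrow> bool" where
  "realizes E ds \<longleftrightarrow> graph_on (length ds) E \<and>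
     sort (map (deg E) [0..<length ds]) = ds"

definition graphical :: "nat list \<Rightarrow> bool" where
  "graphical ds \<longleftrightarrow> sorted ds \<and> (\<exists>E. realizes E ds)"

definition forcibly :: "(nat \<Rightarrow> (nat \<Rightarrow> nat \<Rightarrow> bool) \<Rightarrow> bool) \<Rightarrow> nat list \<Rightarrow> bool" where
  "forcibly P ds \<longleftrightarrow> graphical ds \<and> (\<forall>E. realizes E ds \<longrightarrow> P (length ds) E)"

definition BM :: "(nat \<Rightarrow> (nat \<Rightarrow> nat \<Rightarrow> bool) \<Rightarrow> bool) \<Rightarrow> nat list \<Rightarrow> bool" where
  "BM P ds \<longleftrightarrow> graphical ds \<and>
     (\<forall>ds'. graphical ds' \<and> length ds' = length ds \<and> (\<forall>i<length ds. ds ! i \<le> ds' ! i)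
            \<longrightarrow> forcibly P ds')"

definition nbhd :: "(nat \<Rightarrow> nat \<Rightarrow> bool) \<Rightarrow> nat set \<Rightarrow> nat set" where
  "nbhd E S = {v. \<exists>u\<in>S. E u v}"

definition bind :: "nat \<Rightarrow> (nat \<Rightarrow> nat \<Rightarrow> bool) \<Rightarrow> real" where
  "bind n E = Min {real (card (nbhd E S)) / real (card S) | S.
                   S \<subseteq> {..<n} \<and> S \<noteq> {} \<and> nbhd E S \<noteq> {..<n}}"

definition binding :: "real \<Rightarrow> nat \<Rightarrow> (nat \<Rightarrow> nat \<Rightarrow> bool) \<Rightarrow> bool" where
  "binding b n E \<longleftrightarrow> bind n E \<ge> b"

definition hamiltonian :: "nat \<Rightarrow> (nat \<Rightarrow> nat \<Rightarrow> bool) \<Rightarrow> bool" where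
  "hamiltonian n E \<longleftrightarrow> n \<ge> 3 \<and> (\<exists>p. distinct p \<and> set p = {..<n} \<and>
      (\<forall>i. Suc i < length p \<longrightarrow> E (p ! i) (p ! Suc i)) \<and> E (last p) (hd p))"

end

theory Submission
  imports Defs "HOL-Library.Multiset"
begin

definition D :: "nat \<Rightarrow> nat \<Rightarrow> nat list" where
  "D a n = replicate a a @ replicate (n - 2*a) (n-a-1) @ replicate a (n-1)"

lemma D_len: "2*a \<le> n \<Longrightarrow> length (D a n) = n"
  by (simp add: D_def)

lemma D_nth: "2*a \<le> n \<Longrightarrow> i < n \<Longrightarrow>
   D a n ! i = (if i < a then a else if i < n - a then n-a-1 else n-1)"
  by (auto simp: D_def nth_append)

lemma D_sorted: "2*a+2 \<le> n \<Longrightarrow> sorted (D a n)"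
  by (auto simp: D_def sorted_append)

lemma sort_nth_le:
  fixes f :: "nat \<Rightarrow> nat"
  assumes X: "X \<subseteq> {..<n}" "r \<le> card X" "1 \<le> r" "\<forall>x\<in>X. f x \<le> c"
  shows "sort (map f [0..<n]) ! (r-1) \<le> c"
proof (rule ccontr)
  let ?ys = "sort (map f [0..<n])"
  assume "\<not> ?ys ! (r-1) \<le> c"
  hence gt: "?ys ! (r-1) > c" by simp
  have sub: "{j. j < length ?ys \<and> ?ys ! j \<le> c} \<subseteq> {..<r-1}"
  proof
    fix j assume j: "j \<in> {j. j < length ?ys \<and> ?ys ! j \<le> c}"
    show "j \<in> {..<r-1}"
    proof (rule ccontr)
      assume "j \<notin> {..<r-1}"
      hence "r - 1 \<le> j" by simp
      hence "?ys ! (r-1) \<le> ?ys ! j" using j by (intro sorted_nth_mono) auto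
      thus False using j gt by simp
    qed
  qed
  have "card {j. j < length ?ys \<and> ?ys ! j \<le> c} \<le> card {..<r-1}"
    by (rule card_mono[OF finite_lessThan sub])
  hence c1: "length (filter (\<lambda>x. x \<le> c) ?ys) \<le> r - 1"
    by (simp only: length_filter_conv_card card_lessThan)
  have "length (filter (\<lambda>x. x \<le> c) ?ys) = length (filter (\<lambda>x. x \<le> c) (map f [0..<n]))"
    by (simp only: filter_sort length_sort)
  also have "\<dots> = card {i. i < length (map f [0..<n]) \<and> map f [0..<n] ! i \<le> c}"
    by (rule length_filter_conv_card)
  also have "{i. i < length (map f [0..<n]) \<and> map f [0..<n] ! i \<le> c} = {i. i < n \<and> f i \<le> c}"
    by auto
  also have "card {i. i < n \<and> f i \<le> c} \<ge> card X"
    using X by (intro card_mono) auto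
  finally show False using c1 X by linarith
qed

lemma D_bad:
  assumes "1 \<le> a" "2*a+2 \<le> n" "1 \<le> k" "k \<le> n"
    "D a n ! (k-1) \<le> k-1" "D a n ! (n-k) \<le> n-k"
  shows False
proof -
  have h: "2*a \<le> n" using assms by simp
  have i1: "k-1 < n" using assms by simp
  have i2: "n-k < n" using assms by simp
  show False
  proof (cases "k-1 < a")
    case True
    thus False using D_nth[OF h i1] assms(5) by simp
  next
    case F1: False
    show False
    proof (cases "k-1 < n-a")
      case True
      hence "n-a-1 \<le> k-1" using D_nth[OF h i1] assms(5) F1 by simp
      hence "k = n-a" using True assms by linarith
      hence "n-k = a" using assms by simp
      moreover have "a < n - a" using assms by simp
      ultimately have "D a n ! (n-k) = n-a-1" using D_nth[OF h i2] by simp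
      thus False using assms(6) \<open>n-k = a\<close> assms(2) by simp
    next
      case False
      hence "n-1 \<le> k-1" using D_nth[OF h i1] assms(5) F1 by simp
      hence "n-k = 0" using assms by simp
      hence "D a n ! (n-k) = a" using D_nth[OF h i2] assms by simp
      thus False using assms(6) \<open>n-k = 0\<close> assms(1) by simp
    qed
  qed
qed

lemma binding_ok:
  assumes g: "graph_on n E" and s: "sort (map (deg E) [0..<n]) = ds'"
    and l: "length ds' = n" and le: "\<forall>i<n. D a n ! i \<le> ds' ! i"
    and a: "1 \<le> a" "2*a+2 \<le> n"
  shows "binding 1 n E"
proof -
  have Eb: "E u v \<Longrightarrow> u < n \<and> v < n \<and> u \<noteq> v" for u v using g by (auto simp: graph_on_def)
  have Es: "E u v \<Longrightarrow> E v u" for u v using g by (auto simp: graph_on_def)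
  have key: "card S \<le> card (nbhd E S)" if S: "S \<subseteq> {..<n}" "S \<noteq> {}" "nbhd E S \<noteq> {..<n}" for S
  proof (rule ccontr)
    assume "\<not> card S \<le> card (nbhd E S)"
    hence lt: "card (nbhd E S) < card S" by simp
    define k where "k = card S"
    have fS: "finite S" using S finite_subset by blast
    have k1: "1 \<le> k" using S fS k_def by (simp add: Suc_leI card_gt_0_iff)
    have kn: "k \<le> n" using S k_def by (metis card_lessThan card_mono finite_lessThan)
    have Nsub: "nbhd E S \<subseteq> {..<n}" using Eb by (auto simp: nbhd_def)
    have fN: "finite (nbhd E S)" using Nsub finite_subset by blast
    have d1: "\<forall>x\<in>S. deg E x \<le> k - 1"
    proof
      fix x assume "x \<in> S"
      hence "{u. E x u} \<subseteq> nbhd E S" by (auto simp: nbhd_def)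
      hence "deg E x \<le> card (nbhd E S)" unfolding deg_def using fN card_mono by blast
      thus "deg E x \<le> k - 1" using lt k_def by simp
    qed
    have A: "ds' ! (k-1) \<le> k-1"
      using sort_nth_le[OF S(1) _ k1 d1] k_def s by simp
    define T where "T = {..<n} - nbhd E S"
    have cT: "card T = n - card (nbhd E S)" unfolding T_def using Nsub
      by (simp add: card_Diff_subset fN)
    have cT2: "n - k + 1 \<le> card T" using cT lt k_def kn by linarith
    have d2: "\<forall>x\<in>T. deg E x \<le> n - k"
    proof
      fix x assume x: "x \<in> T"
      have "{u. E x u} \<subseteq> {..<n} - S"
      proof
        fix u assume "u \<in> {u. E x u}"
        hence "E x u" by simp
        moreover have "u \<notin> S"
        proof
          assume "u \<in> S"
          hence "x \<in> nbhd E S" using Es[OF \<open>E x u\<close>] by (auto simp: nbhd_def)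
          thus False using x T_def by simp
        qed
        ultimately show "u \<in> {..<n} - S" using Eb by auto
      qed
      hence "deg E x \<le> card ({..<n} - S)" unfolding deg_def by (simp add: card_mono)
      also have "\<dots> = n - k" using S k_def by (simp add: card_Diff_subset fS)
      finally show "deg E x \<le> n - k" .
    qed
    have B: "ds' ! (n-k) \<le> n-k"
      using sort_nth_le[of T n "n-k+1", OF _ cT2 _ d2] s T_def by simp
    have "k-1 < n" "n-k < n" using k1 kn by auto
    hence "D a n ! (k-1) \<le> ds' ! (k-1)" "D a n ! (n-k) \<le> ds' ! (n-k)" using le by auto
    hence "D a n ! (k-1) \<le> k-1" "D a n ! (n-k) \<le> n-k" using A B by auto
    thus False using D_bad[OF a k1 kn] by blast
  qed
  define M where "M = {real (card (nbhd E S)) / real (card S) | S.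
                   S \<subseteq> {..<n} \<and> S \<noteq> {} \<and> nbhd E S \<noteq> {..<n}}"
  have fM: "finite M"
  proof -
    have "M \<subseteq> (\<lambda>S. real (card (nbhd E S)) / real (card S)) ` Pow {..<n}"
      unfolding M_def by auto
    thus ?thesis by (rule finite_subset) simp
  qed
  have "0 \<notin> nbhd E {0}" using Eb by (auto simp: nbhd_def)
  moreover have "{0::nat} \<subseteq> {..<n}" using a by simp
  ultimately have "nbhd E {0} \<noteq> {..<n}" "{0::nat} \<subseteq> {..<n}" "{0::nat} \<noteq> {}" by auto
  hence "real (card (nbhd E {0})) / real (card {0::nat}) \<in> M"
    unfolding M_def by blast
  hence neM: "M \<noteq> {}" by blast
  have "\<forall>x\<in>M. 1 \<le> x"
  proof
    fix x assume "x \<in> M"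
    then obtain S where S: "S \<subseteq> {..<n}" "S \<noteq> {}" "nbhd E S \<noteq> {..<n}"
      and x: "x = real (card (nbhd E S)) / real (card S)" unfolding M_def by blast
    have "card S > 0" using S by (metis card_gt_0_iff finite_lessThan finite_subset)
    thus "1 \<le> x" using key[OF S] x by simp
  qed
  hence "1 \<le> Min M" using fM neM by simp
  thus ?thesis unfolding binding_def bind_def M_def by simp
qed


definition E0 :: "nat \<Rightarrow> nat \<Rightarrow> nat \<Rightarrow> nat \<Rightarrow> bool" where
  "E0 a n u v \<longleftrightarrow> u < n \<and> v < n \<and> u \<noteq> v \<and> (n - a \<le> u \<or> n - a \<le> v \<or> (a \<le> u \<and> a \<le> v))"

lemma E0_graph: "graph_on n (E0 a n)"
  by (auto simp: graph_on_def E0_def)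

lemma E0_deg:
  assumes "2*a+2 \<le> n" "u < n"
  shows "deg (E0 a n) u = (if u < a then a else if u < n - a then n-a-1 else n-1)"
proof -
  have "u < a \<or> (a \<le> u \<and> u < n - a) \<or> n - a \<le> u" by auto
  then consider "u < a" | "a \<le> u" "u < n - a" | "n - a \<le> u" by blast
  thus ?thesis
  proof cases
    case 1
    hence "{v. E0 a n u v} = {n-a..<n}" using assms by (auto simp: E0_def)
    thus ?thesis using 1 assms by (simp add: deg_def)
  next
    case 2
    hence "{v. E0 a n u v} = {a..<n} - {u}" using assms by (auto simp: E0_def)
    thus ?thesis using 2 assms by (simp add: deg_def)
  next
    case 3
    hence "{v. E0 a n u v} = {..<n} - {u}" using assms by (auto simp: E0_def)
    thus ?thesis using 3 assms by (simp add: deg_def)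
  qed
qed

lemma E0_realizes:
  assumes "2*a+2 \<le> n"
  shows "realizes (E0 a n) (D a n)"
proof -
  have h: "2*a \<le> n" using assms by simp
  have "map (deg (E0 a n)) [0..<n] = D a n"
  proof (rule nth_equalityI)
    show "length (map (deg (E0 a n)) [0..<n]) = length (D a n)" using D_len[OF h] by simp
    fix i assume "i < length (map (deg (E0 a n)) [0..<n])"
    hence i: "i < n" by simp
    show "map (deg (E0 a n)) [0..<n] ! i = D a n ! i"
      using i by (simp add: D_nth[OF h i] E0_deg[OF assms i])
  qed
  thus ?thesis unfolding realizes_def using D_len[OF h] D_sorted[OF assms] E0_graph
    by (simp add: sorted_sort_id)
qed


lemma E0_nonham:
  assumes a1: "1 \<le> a" and an: "2*a+2 \<le> n"
  shows "\<not> hamiltonian n (E0 a n)"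
proof
  assume "hamiltonian n (E0 a n)"
  then obtain p where dp: "distinct p" and sp: "set p = {..<n}"
    and ep: "\<forall>i. Suc i < length p \<longrightarrow> E0 a n (p ! i) (p ! Suc i)"
    and el: "E0 a n (last p) (hd p)" unfolding hamiltonian_def by blast
  have lp: "length p = n" using distinct_card[OF dp] sp by simp
  have n1: "1 \<le> n" using an by simp
  define s where "s i = (if i = n-1 then 0 else i+1)" for i
  define pr where "pr i = (if i = 0 then n-1 else i-1)" for i
  have cyc: "E0 a n (p!i) (p!(s i))" if "i < n" for i
  proof (cases "i = n-1")
    case True
    have "p \<noteq> []" using lp n1 by auto
    hence "last p = p!(n-1)" using lp by (simp add: last_conv_nth)
    moreover have "hd p = p!0" using \<open>p \<noteq> []\<close> by (simp add: hd_conv_nth)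
    ultimately show ?thesis using el True s_def by simp
  next
    case False
    thus ?thesis using ep that lp s_def by simp
  qed
  have s_lt: "i < n \<Longrightarrow> s i < n" for i using n1 s_def by auto
  have pr_lt: "i < n \<Longrightarrow> pr i < n" for i using n1 pr_def by auto
  have spr: "i < n \<Longrightarrow> s (pr i) = i" for i using n1 s_def pr_def by auto
  have inj_pr: "inj_on pr {..<n}" using n1 unfolding inj_on_def pr_def by auto
  have cardX: "card {i. i < n \<and> p!i \<in> X} = card X" if "X \<subseteq> {..<n}" for X
  proof -
    have "bij_betw (nth p) {i. i < n \<and> p!i \<in> X} X"
      unfolding bij_betw_def
    proof
      show "inj_on (nth p) {i. i < n \<and> p ! i \<in> X}"
        using dp lp by (auto simp: inj_on_def nth_eq_iff_index_eq)
      show "(!) p ` {i. i < n \<and> p ! i \<in> X} = X"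
      proof
        show "(!) p ` {i. i < n \<and> p ! i \<in> X} \<subseteq> X" by auto
        show "X \<subseteq> (!) p ` {i. i < n \<and> p ! i \<in> X}"
        proof
          fix x assume "x \<in> X"
          hence "x \<in> set p" using that sp by auto
          then obtain i where "i < n" "p!i = x" using lp by (auto simp: in_set_conv_nth)
          thus "x \<in> (!) p ` {i. i < n \<and> p ! i \<in> X}" using \<open>x \<in> X\<close> by force
        qed
      qed
    qed
    thus ?thesis by (rule bij_betw_same_card)
  qed
  define PI where "PI = {i. i < n \<and> p!i \<in> {..<a}}"
  define PA where "PA = {i. i < n \<and> p!i \<in> {n-a..<n}}"
  have cPI: "card PI = a" unfolding PI_def using cardX[of "{..<a}"] an by simp
  have cPA: "card PA = a" unfolding PA_def using cardX[of "{n-a..<n}"] an by fastforce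
  have pin: "i < n \<Longrightarrow> p!i < n" for i using sp lp by (metis lessThan_iff nth_mem)
  have indep: "E0 a n u v \<Longrightarrow> u < a \<Longrightarrow> n - a \<le> v \<and> v < n" for u v
    using an by (auto simp: E0_def)
  have sPI: "j \<in> PI \<Longrightarrow> s j \<in> PA" for j
    using cyc[of j] indep[of "p!j" "p!(s j)"] s_lt[of j] unfolding PI_def PA_def by auto
  have prPI: "j \<in> PI \<Longrightarrow> pr j \<in> PA" for j
  proof -
    assume j: "j \<in> PI"
    hence jn: "j < n" unfolding PI_def by simp
    have "E0 a n (p!(pr j)) (p!j)" using cyc[OF pr_lt[OF jn]] spr[OF jn] by simp
    hence "E0 a n (p!j) (p!(pr j))" by (auto simp: E0_def)
    thus "pr j \<in> PA" using indep[of "p!j" "p!(pr j)"] j pr_lt[OF jn] unfolding PI_def PA_def by auto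
  qed
  have "pr ` PI = PA"
  proof (rule card_subset_eq)
    show "finite PA" unfolding PA_def by simp
    show "pr ` PI \<subseteq> PA" using prPI by auto
    have "inj_on pr PI" using inj_pr unfolding PI_def by (rule inj_on_subset) auto
    thus "card (pr ` PI) = card PA" using cPI cPA by (simp add: card_image)
  qed
  define Q where "Q = PI \<union> PA"
  have Qn: "i \<in> Q \<Longrightarrow> i < n" for i unfolding Q_def PI_def PA_def by auto
  have sQ: "i \<in> Q \<Longrightarrow> s i \<in> Q" for i
  proof -
    assume i: "i \<in> Q"
    show "s i \<in> Q"
    proof (cases "i \<in> PI")
      case True thus ?thesis using sPI Q_def by auto
    next
      case False
      hence "i \<in> PA" using i Q_def by auto
      then obtain j where j: "j \<in> PI" "i = pr j" using \<open>pr ` PI = PA\<close> by blast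
      hence "s i = j" using spr[of j] unfolding PI_def by auto
      thus ?thesis using j Q_def by auto
    qed
  qed
  have "PI \<noteq> {}" using cPI a1 by auto
  then obtain j0 where j0: "j0 \<in> Q" unfolding Q_def by blast
  have up: "j0 + d < n \<longrightarrow> j0 + d \<in> Q" for d
  proof (induction d)
    case 0 thus ?case using j0 by simp
  next
    case (Suc d)
    show ?case
    proof
      assume "j0 + Suc d < n"
      hence "j0 + d \<in> Q" "j0 + d \<noteq> n - 1" using Suc by auto
      hence "s (j0+d) \<in> Q" "s (j0 + d) = j0 + Suc d" using sQ[of "j0+d"] s_def by auto
      thus "j0 + Suc d \<in> Q" by simp
    qed
  qed
  have "n - 1 \<in> Q" using up[of "n-1-j0"] Qn[OF j0] by simp
  hence z: "0 \<in> Q" using sQ[of "n-1"] s_def by simp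
  have all: "d < n \<longrightarrow> d \<in> Q" for d
  proof (induction d)
    case 0 thus ?case using z by simp
  next
    case (Suc d)
    show ?case
    proof
      assume "Suc d < n"
      hence "d \<in> Q" "d \<noteq> n - 1" using Suc by auto
      hence "s d \<in> Q" "s d = Suc d" using sQ[of d] s_def by auto
      thus "Suc d \<in> Q" by simp
    qed
  qed
  have "a \<in> set p" using sp an by simp
  then obtain i where i: "i < n" "p!i = a" using lp by (auto simp: in_set_conv_nth)
  hence "i \<in> Q" using all by simp
  thus False using i an unfolding Q_def PI_def PA_def by auto
qed


lemma main_D:
  assumes a1: "1 \<le> a" and an: "2*a+2 \<le> n"
  shows "graphical (D a n) \<and> BM (binding 1) (D a n) \<and> \<not> BM hamiltonian (D a n)"
proof -
  have h: "2*a \<le> n" using an by simp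
  have G: "graphical (D a n)" unfolding graphical_def using D_sorted[OF an] E0_realizes[OF an] by blast
  have B: "BM (binding 1) (D a n)"
    unfolding BM_def
  proof (intro conjI G allI impI)
    fix ds' assume H: "graphical ds' \<and> length ds' = length (D a n) \<and> (\<forall>i<length (D a n). D a n ! i \<le> ds' ! i)"
    show "forcibly (binding 1) ds'"
      unfolding forcibly_def
    proof (intro conjI allI impI)
      show "graphical ds'" using H by simp
      fix E assume "realizes E ds'"
      thus "binding 1 (length ds') E" using H D_len[OF h] binding_ok[OF _ _ _ _ a1 an]
        unfolding realizes_def by auto
    qed
  qed
  have "\<not> forcibly hamiltonian (D a n)"
    using E0_realizes[OF an] E0_nonham[OF a1 an] D_len[OF h] unfolding forcibly_def by auto
  hence "\<not> BM hamiltonian (D a n)" unfolding BM_def by auto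
  thus ?thesis using G B by simp
qed

theorem mainTheorem13:
  fixes n :: nat
  assumes "n \<ge> 4"
  shows "let m = n div 2;
             ds = replicate (m - 1) (m - 1) @ replicate (n - 2 * m + 2) (n - m)
                  @ replicate (m - 1) (n - 1)
         in graphical ds \<and> BM (binding 1) ds \<and> \<not> BM hamiltonian ds"
proof -
  define m where "m = n div 2"
  define a where "a = m - 1"
  have m2: "2 \<le> m" using assms m_def by simp
  have mn: "2*m \<le> n" using m_def by simp
  have a1: "1 \<le> a" using m2 a_def by simp
  have an: "2*a+2 \<le> n" using m2 mn a_def by simp
  have eq: "replicate (m - 1) (m - 1) @ replicate (n - 2 * m + 2) (n - m)
                  @ replicate (m - 1) (n - 1) = D a n"
  proof -
    have e1: "n - 2 * m + 2 = n - 2*a" using m2 mn a_def by simp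
    have e2: "n - m = n - a - 1" using m2 mn a_def by simp
    show ?thesis unfolding D_def e1 e2 a_def[symmetric] ..
  qed
  show ?thesis unfolding Let_def m_def[symmetric] eq using main_D[OF a1 an] .
qed

end
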